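(* For all $n\ge0$, $z(n)\in\{f(n),\ f(n)+n,\ f(n)+1,\ f(n)-n\}$.
   Context: $\mathbb{N}=\{0,1,2,\dots\}$. The sequence $f:\mathbb{N}\to\mathbb{N}$ is defined greedily: $f(0)=0$, and for $n\ge1$, $f(n)$ is the least natural number such that (i) $f(n)\notin\{f(0),f(1),\dots,f(n-1)\}$ and (ii) $\sum_{1\le i\le n} f(i)$ is divisible by $n$. The sequence $z:\mathbb{N}\to\mathbb{N}$ is defined greedily: $z(0)=0$, and for $n\ge1$, $z(n)$ is the least natural number such that (i) $z(n)\notin\{z(0),\dots,z(n-1)\}$ and (ii) $\sum_{2\le i\le n} z(i)$ is divisible by $n+1$ (the empty sum being $0$). *)

theory Defs
  imports Main
begin

fun fpre :: "nat \<Rightarrow> nat list" where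
  "fpre 0 = [0]"
| "fpre (Suc n) = fpre n @
     [LEAST v. v \<notin> set (fpre n) \<and> Suc n dvd sum_list (drop 1 (fpre n @ [v]))]"

definition f :: "nat \<Rightarrow> nat" where
  "f n = fpre n ! n"

fun zpre :: "nat \<Rightarrow> nat list" where
  "zpre 0 = [0]"
| "zpre (Suc n) = zpre n @
     [LEAST v. v \<notin> set (zpre n) \<and> (Suc n + 1) dvd sum_list (drop 2 (zpre n @ [v]))]"

definition z :: "nat \<Rightarrow> nat" where
  "z n = zpre n ! n"

end

theory Submission imports Defs begin

fun gs :: "nat \<Rightarrow> nat list" where
  "gs 0 = [1]"
| "gs (Suc m) = gs m @ [gs m ! m + (if Suc m \<in> (\<lambda>j. j + gs m ! j) ` {..m} then 1 else 2)]"

definition g :: "nat \<Rightarrow> nat" where "g m = gs m ! m"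

lemma gs_len: "length (gs m) = Suc m"
  by (induction m) auto

lemma gs_nth: "j \<le> m \<Longrightarrow> gs m ! j = g j"
proof (induction m)
  case 0 then show ?case by (simp add: g_def)
next
  case (Suc m)
  show ?case
  proof (cases "j = Suc m")
    case True then show ?thesis by (simp add: g_def)
  next
    case False
    then have "j \<le> m" using Suc.prems by simp
    then show ?thesis using Suc.IH gs_len[of m] by (simp add: nth_append)
  qed
qed

lemma g_0: "g 0 = 1" by (simp add: g_def)

lemma g_Suc: "g (Suc m) = g m + (if Suc m \<in> (\<lambda>j. j + g j) ` {..m} then 1 else 2)"
proof -
  have "g (Suc m) = gs m ! m + (if Suc m \<in> (\<lambda>j. j + gs m ! j) ` {..m} then 1 else 2)"
    unfolding g_def using gs_len[of m] by (simp add: nth_append)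
  moreover have "(\<lambda>j. j + gs m ! j) ` {..m} = (\<lambda>j. j + g j) ` {..m}"
    by (rule image_cong) (auto simp: gs_nth)
  ultimately show ?thesis by (simp add: gs_nth)
qed

fun hs :: "nat \<Rightarrow> nat list" where
  "hs 0 = [2]"
| "hs (Suc m) = hs m @ [hs m ! m + (if Suc m \<in> insert 1 ((\<lambda>j. j + hs m ! j + 1) ` {..m}) then 1 else 2)]"

definition h :: "nat \<Rightarrow> nat" where "h m = hs m ! m"

lemma hs_len: "length (hs m) = Suc m"
  by (induction m) auto

lemma hs_nth: "j \<le> m \<Longrightarrow> hs m ! j = h j"
proof (induction m)
  case 0 then show ?case by (simp add: h_def)
next
  case (Suc m)
  show ?case
  proof (cases "j = Suc m")
    case True then show ?thesis by (simp add: h_def)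
  next
    case False
    then have "j \<le> m" using Suc.prems by simp
    then show ?thesis using Suc.IH hs_len[of m] by (simp add: nth_append)
  qed
qed

lemma h_0: "h 0 = 2" by (simp add: h_def)

lemma h_Suc: "h (Suc m) = h m + (if Suc m \<in> insert 1 ((\<lambda>j. j + h j + 1) ` {..m}) then 1 else 2)"
proof -
  have "h (Suc m) = hs m ! m + (if Suc m \<in> insert 1 ((\<lambda>j. j + hs m ! j + 1) ` {..m}) then 1 else 2)"
    unfolding h_def using hs_len[of m] by (simp add: nth_append)
  moreover have "(\<lambda>j. j + hs m ! j + 1) ` {..m} = (\<lambda>j. j + h j + 1) ` {..m}"
    by (rule image_cong) (auto simp: hs_nth)
  ultimately show ?thesis by (simp add: hs_nth)
qed

lemma g_smono: "strict_mono g"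
  unfolding strict_mono_Suc_iff by (simp add: g_Suc)
lemma h_smono: "strict_mono h"
  unfolding strict_mono_Suc_iff by (simp add: h_Suc)
lemma g_ge: "g m \<ge> Suc m"
  by (induction m) (auto simp: g_0 g_Suc)
lemma h_ge: "h m \<ge> m + 2"
  by (induction m) (auto simp: h_0 h_Suc)
lemma g_Suc_le: "g (Suc m) \<le> g m + 2" by (simp add: g_Suc)
lemma h_Suc_le: "h (Suc m) \<le> h m + 2" by (simp add: h_Suc)

lemma g_Suc': "g (Suc m) = g m + (if Suc m \<in> range (\<lambda>j. j + g j) then 1 else 2)"
proof -
  have "Suc m \<in> (\<lambda>j. j + g j) ` {..m} \<longleftrightarrow> Suc m \<in> range (\<lambda>j. j + g j)"
  proof
    assume "Suc m \<in> range (\<lambda>j. j + g j)"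
    then obtain j where j: "Suc m = j + g j" by auto
    have "j \<le> m" using g_ge[of j] j by simp
    then show "Suc m \<in> (\<lambda>j. j + g j) ` {..m}" using j by auto
  qed auto
  then show ?thesis by (simp add: g_Suc)
qed

lemma h_Suc': "h (Suc m) = h m + (if Suc m = 1 \<or> Suc m \<in> range (\<lambda>j. j + h j + 1) then 1 else 2)"
proof -
  have "Suc m \<in> (\<lambda>j. j + h j + 1) ` {..m} \<longleftrightarrow> Suc m \<in> range (\<lambda>j. j + h j + 1)"
  proof
    assume "Suc m \<in> range (\<lambda>j. j + h j + 1)"
    then obtain j where j: "Suc m = j + h j + 1" by auto
    have "j \<le> m" using h_ge[of j] j by simp
    then show "Suc m \<in> (\<lambda>j. j + h j + 1) ` {..m}" using j by auto
  qed auto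
  then show ?thesis by (simp add: h_Suc)
qed

lemma count_fin: "strict_mono (b::nat\<Rightarrow>nat) \<Longrightarrow> finite {j. b j \<le> m}"
  by (rule finite_subset[of _ "{..m}"]) (auto dest: strict_mono_imp_increasing[of b] intro: order_trans)

lemma count_Suc:
  assumes sm: "strict_mono (b::nat\<Rightarrow>nat)"
  shows "card {j. b j \<le> Suc m} = card {j. b j \<le> m} + (if Suc m \<in> range b then 1 else 0)"
proof (cases "Suc m \<in> range b")
  case True
  then obtain k where k: "b k = Suc m" by auto
  have "{j. b j \<le> Suc m} = insert k {j. b j \<le> m}"
    using k strict_mono_eq[OF sm] by (auto simp: le_Suc_eq) (metis)
  moreover have "k \<notin> {j. b j \<le> m}" using k by simp
  ultimately show ?thesis using True count_fin[OF sm, of m] by simp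
next
  case False
  then have "{j. b j \<le> Suc m} = {j. b j \<le> m}"
    by (auto simp: le_Suc_eq) (metis rangeI)
  then show ?thesis using False by simp
qed

lemma b_smono: "strict_mono (\<lambda>j. j + g j)"
  using g_smono by (simp add: strict_mono_def add_strict_mono)
lemma e_smono: "strict_mono (\<lambda>j. j + h j + 1)"
  using h_smono by (simp add: strict_mono_def add_strict_mono)

lemma g_count: "g m + card {j. j + g j \<le> m} = 2 * m + 1"
proof (induction m)
  case 0
  have "{j. j + g j \<le> 0} = {}" using g_ge by (auto simp: g_0) (metis add_is_0 g_ge not_less_eq_eq zero_le)
  then show ?case by (simp add: g_0)
next
  case (Suc m)
  show ?case using Suc count_Suc[OF b_smono, of m] by (simp add: g_Suc')
qed

lemma h_count: "h m + card {j. j + h j + 1 \<le> m} + (if m \<ge> 1 then 1 else 0) = 2 * m + 2"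
proof (induction m)
  case 0
  have "{j. j + h j + 1 \<le> 0} = {}" by auto
  then show ?case by (simp add: h_0)
next
  case (Suc m)
  show ?case using Suc count_Suc[OF e_smono, of m] by (auto simp: h_Suc')
qed

lemma b_gap: "j1 < j2 \<Longrightarrow> j1 + g j1 + 2 \<le> j2 + g j2"
  using g_smono by (simp add: strict_mono_def) (metis add_le_mono Suc_leI add_Suc_right add_2_eq_Suc' add.commute)

lemma D_bounds: "g m \<le> h m \<and> h m \<le> g m + 1"
proof (induction m rule: less_induct)
  case (less m)
  show ?case
  proof (cases "m = 0")
    case True then show ?thesis by (simp add: g_0 h_0)
  next
    case False
    define A where "A = {j. j + g j \<le> m}"
    define A' where "A' = {j. j + h j + 1 \<le> m}"
    have fA: "finite A" unfolding A_def by (rule count_fin[OF b_smono])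
    have sub: "A' \<subseteq> A"
    proof
      fix j assume "j \<in> A'"
      then have j: "j + h j + 1 \<le> m" by (simp add: A'_def)
      then have "j < m" by simp
      then have "g j \<le> h j" using less.IH by blast
      then show "j \<in> A" using j by (simp add: A_def)
    qed
    have c1: "card (A - A') \<le> 1"
    proof -
      have "\<forall>x\<in>A - A'. \<forall>y\<in>A - A'. x = y"
      proof (intro ballI, rule ccontr)
        fix x y assume x: "x \<in> A - A'" and y: "y \<in> A - A'" and ne: "x \<noteq> y"
        have key: "\<And>u v. u \<in> A - A' \<Longrightarrow> v \<in> A - A' \<Longrightarrow> u < v \<Longrightarrow> False"
        proof -
          fix u v assume u: "u \<in> A - A'" and v: "v \<in> A - A'" and uv: "u < v"
          have um: "m < u + h u + 1" "u + g u \<le> m" using u by (auto simp: A_def A'_def)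
          have vm: "v + g v \<le> m" using v by (auto simp: A_def)
          have "u < m" using um g_ge[of u] by simp
          then have "h u \<le> g u + 1" using less.IH by blast
          moreover have "u + g u + 2 \<le> v + g v" using b_gap[OF uv] .
          ultimately show False using um vm by linarith
        qed
        show False using key[OF x y] key[OF y x] ne by linarith
      qed
      then show ?thesis using card_le_Suc0_iff_eq[of "A - A'"] fA by simp
    qed
    have cA: "card A = card A' + card (A - A')"
      using card_Diff_subset[OF finite_subset[OF sub fA] sub] card_mono[OF fA sub] by simp
    have "g m + card A = 2 * m + 1" using g_count[of m] by (simp add: A_def)
    moreover have "h m + card A' + 1 = 2 * m + 2" using h_count[of m] False by (simp add: A'_def)
    ultimately show ?thesis using cA c1 by linarith
  qed
qed

fun cnt :: "(nat \<Rightarrow> nat) \<Rightarrow> nat \<Rightarrow> nat" where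
  "cnt r 0 = 0"
| "cnt r (Suc n) = cnt r n + (if Suc n \<in> range r then 1 else 0)"

lemma cut:
  assumes sm: "strict_mono (r::nat\<Rightarrow>nat)" and r0: "r 0 \<ge> 1"
  shows "r m \<le> n \<longleftrightarrow> m < cnt r n"
proof (induction n arbitrary: m)
  case 0
  have "r m \<ge> 1" using r0 strict_mono_less_eq[OF sm, of 0 m] by simp
  then show ?case by simp
next
  case (Suc n)
  show ?case
  proof (cases "Suc n \<in> range r")
    case True
    then obtain k where k: "r k = Suc n" by auto
    have "\<not> k < cnt r n" using Suc.IH[of k] k by simp
    moreover have "\<not> cnt r n < k"
    proof
      assume "cnt r n < k"
      then have "r (cnt r n) < r k" using sm by (simp add: strict_mono_less)
      then have "r (cnt r n) \<le> n" using k by simp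
      then show False using Suc.IH by simp
    qed
    ultimately have kc: "k = cnt r n" by simp
    have "r m \<le> Suc n \<longleftrightarrow> r m \<le> n \<or> r m = r k" using k by (auto simp: le_Suc_eq)
    also have "\<dots> \<longleftrightarrow> m < cnt r n \<or> m = k" using Suc.IH strict_mono_eq[OF sm] by simp
    finally show ?thesis using True kc by auto
  next
    case False
    then have "r m \<noteq> Suc n" by (metis rangeI)
    then show ?thesis using Suc.IH False by (auto simp: le_Suc_eq)
  qed
qed

lemma K:
  assumes sm: "strict_mono (r::nat\<Rightarrow>nat)" and r0: "r 0 \<ge> 1"
    and st: "\<And>p. r (Suc p) = r p + (if P (Suc p) then 1 else 2)"
    and z: "cnt r n = 0 \<Longrightarrow> r 0 = Suc n"
  shows "Suc n \<in> range r \<longleftrightarrow> (n \<notin> range r \<or> P (cnt r n))"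
proof (cases "cnt r n")
  case 0
  then have "\<And>m. \<not> r m \<le> n" using cut[OF sm r0] by simp
  then have "n \<notin> range r" by auto
  moreover have "Suc n \<in> range r" using z[OF 0] by (metis rangeI)
  ultimately show ?thesis by simp
next
  case (Suc p)
  let ?c = "cnt r n"
  have gp: "r p \<le> n" using cut[OF sm r0, of p n] Suc by simp
  have gc: "\<not> r ?c \<le> n" using cut[OF sm r0, of ?c n] by simp
  have rc: "r ?c = r p + (if P ?c then 1 else 2)" using st[of p] Suc by simp
  have nr: "n \<in> range r \<longleftrightarrow> n = r p"
  proof
    assume "n \<in> range r"
    then obtain m where m: "r m = n" by auto
    then have "m < ?c" using cut[OF sm r0, of m n] by simp
    moreover have "\<not> m < p" using m gp sm by (metis strict_mono_less not_less)
    ultimately have "m = p" using Suc by simp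
    then show "n = r p" using m by simp
  qed auto
  have sr: "Suc n \<in> range r \<longleftrightarrow> r ?c = Suc n"
  proof
    assume "Suc n \<in> range r"
    then obtain m where m: "r m = Suc n" by auto
    then have "\<not> m < ?c" using cut[OF sm r0, of m n] by simp
    moreover have "\<not> ?c < m"
    proof
      assume "?c < m" then have "r ?c < r m" using sm by (simp add: strict_mono_less)
      then show False using m gc by simp
    qed
    ultimately show "r ?c = Suc n" using m by (metis linorder_neqE_nat)
  qed (metis rangeI)
  show ?thesis using nr sr rc gp gc by auto
qed

lemma g0ge: "g 0 \<ge> 1" by (simp add: g_0)
lemma h0ge: "h 0 \<ge> 1" by (simp add: h_0)

lemma fpre_len: "length (fpre n) = Suc n" by (induction n) auto
lemma zpre_len: "length (zpre n) = Suc n" by (induction n) auto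


definition FI :: "nat \<Rightarrow> bool" where
  "FI n \<longleftrightarrow> set (fpre n) = {0..<cnt g n} \<union> (if n \<in> range g then {} else {cnt g n}) \<union> (\<lambda>j. j + g j) ` {..<cnt g n}
   \<and> sum_list (drop 1 (fpre n)) = n * cnt g n"

lemma F_step:
  assumes I: "FI n"
  shows "fpre (Suc n) ! Suc n = (if Suc n \<in> range g then cnt g n + Suc n else cnt g n) \<and> FI (Suc n)"
proof -
  let ?c = "cnt g n"
  let ?b = "\<lambda>j. j + g j"
  define U where "U = set (fpre n)"
  have U: "U = {0..<?c} \<union> (if n \<in> range g then {} else {?c}) \<union> ?b ` {..<?c}"
    using I by (simp add: FI_def U_def)
  have S: "sum_list (drop 1 (fpre n)) = n * ?c" using I by (simp add: FI_def)
  have Kg: "Suc n \<in> range g \<longleftrightarrow> (n \<notin> range g \<or> ?c \<in> range ?b)"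
  proof (rule K[OF g_smono g0ge])
    show "\<And>p. g (Suc p) = g p + (if Suc p \<in> range ?b then 1 else 2)" by (rule g_Suc')
    show "?c = 0 \<Longrightarrow> g 0 = Suc n"
    proof -
      assume "?c = 0"
      then have "\<not> g 0 \<le> n" using cut[OF g_smono g0ge, of 0 n] by simp
      then show "g 0 = Suc n" by (simp add: g_0)
    qed
  qed
  have rb: "?c \<in> range ?b \<longleftrightarrow> ?c \<in> ?b ` {..<?c}"
  proof
    assume "?c \<in> range ?b"
    then obtain j where j: "?c = j + g j" by auto
    then have "j < ?c" using g_ge[of j] by simp
    then show "?c \<in> ?b ` {..<?c}" using j by auto
  qed auto
  have cU: "?c \<in> U \<longleftrightarrow> Suc n \<in> range g" using Kg rb U by auto
  have bnd: "\<And>x. x \<in> U \<Longrightarrow> x < ?c + Suc n"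
  proof -
    fix x assume "x \<in> U"
    then consider "x < ?c" | "x = ?c" | j where "j < ?c" "x = j + g j" using U by (auto split: if_splits)
    then show "x < ?c + Suc n"
    proof cases
      case 3
      then have "g j \<le> n" using cut[OF g_smono g0ge, of j n] by simp
      then show ?thesis using 3 by simp
    qed auto
  qed
  have low: "\<And>x. x < ?c \<Longrightarrow> x \<in> U" using U by auto
  define v0 where "v0 = (if Suc n \<in> range g then ?c + Suc n else ?c)"
  have sumv: "\<And>v. sum_list (drop 1 (fpre n @ [v])) = n * ?c + v"
    using S fpre_len[of n] by simp
  have L: "(LEAST v. v \<notin> U \<and> Suc n dvd sum_list (drop 1 (fpre n @ [v]))) = v0"
  proof (rule Least_equality)
    show "v0 \<notin> U \<and> Suc n dvd sum_list (drop 1 (fpre n @ [v0]))"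
    proof
      show "v0 \<notin> U" using cU bnd v0_def by auto
      have "sum_list (drop 1 (fpre n @ [v0])) = n * ?c + v0" by (rule sumv)
      also have "n * ?c + v0 = Suc n * (if Suc n \<in> range g then ?c + 1 else ?c)"
        by (simp add: v0_def algebra_simps)
      finally show "Suc n dvd sum_list (drop 1 (fpre n @ [v0]))" by (metis dvd_triv_left)
    qed
  next
    fix v assume v: "v \<notin> U \<and> Suc n dvd sum_list (drop 1 (fpre n @ [v]))"
    then have vc: "?c \<le> v" using low by (meson not_less)
    have "Suc n dvd Suc n * ?c + (v - ?c)" using v sumv vc
      by (metis add.commute add_diff_inverse_nat mult_Suc not_less group_cancel.add2)
    then have dv: "Suc n dvd (v - ?c)" by (metis dvd_add_right_iff dvd_triv_left)
    show "v0 \<le> v"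
    proof (cases "Suc n \<in> range g")
      case True
      then have "v \<noteq> ?c" using v cU by auto
      then have "v - ?c > 0" using vc by simp
      then have "Suc n \<le> v - ?c" using dv by (simp add: dvd_imp_le)
      then show ?thesis using True v0_def by simp
    next
      case False then show ?thesis using vc v0_def by simp
    qed
  qed
  have fS: "fpre (Suc n) = fpre n @ [v0]" using L by (simp add: U_def)
  have val: "fpre (Suc n) ! Suc n = v0" using fS fpre_len[of n] by (simp add: nth_append)
  have cS: "cnt g (Suc n) = (if Suc n \<in> range g then ?c + 1 else ?c)" by simp
  have setS: "set (fpre (Suc n)) = insert v0 U" using fS U_def by simp
  have sumS: "sum_list (drop 1 (fpre (Suc n))) = Suc n * cnt g (Suc n)"
    using fS sumv cS by (simp add: v0_def algebra_simps)
  have FIS: "FI (Suc n)"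
  proof (cases "Suc n \<in> range g")
    case True
    then obtain k where k: "g k = Suc n" by (metis rangeE)
    have "k < cnt g (Suc n)" using cut[OF g_smono g0ge, of k "Suc n"] k by simp
    moreover have "\<not> k < ?c" using cut[OF g_smono g0ge, of k n] k by simp
    ultimately have "k = ?c" using True by simp
    then have v0b: "v0 = ?b ?c" using k True v0_def by simp
    have cin: "?c \<in> U" using cU True by simp
    have "insert v0 U = {0..<Suc ?c} \<union> ?b ` {..<Suc ?c}"
    proof
      show "insert v0 U \<subseteq> {0..<Suc ?c} \<union> ?b ` {..<Suc ?c}" using U v0b by auto
      show "{0..<Suc ?c} \<union> ?b ` {..<Suc ?c} \<subseteq> insert v0 U"
      proof
        fix x assume "x \<in> {0..<Suc ?c} \<union> ?b ` {..<Suc ?c}"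
        then consider "x < ?c" | "x = ?c" | j where "j < Suc ?c" "x = ?b j" by (auto simp: less_Suc_eq)
        then show "x \<in> insert v0 U"
        proof cases
          case 3 then show ?thesis using U v0b by (cases "j = ?c") auto
        qed (use low cin in auto)
      qed
    qed
    then show ?thesis unfolding FI_def using setS sumS cS True by simp
  next
    case False
    have "insert v0 U = {0..<?c} \<union> {?c} \<union> ?b ` {..<?c}" using U False v0_def by auto
    then show ?thesis unfolding FI_def using setS sumS cS False by simp
  qed
  show ?thesis using val FIS v0_def by simp
qed

lemma FI_all: "FI n"
proof (induction n)
  case 0
  have "0 \<notin> range g" using g_ge by (metis Zero_not_Suc le_zero_eq rangeE)
  then show ?case by (simp add: FI_def)
next
  case (Suc n) then show ?case using F_step by blast
qed

lemma f_Suc: "f (Suc n) = (if Suc n \<in> range g then cnt g n + Suc n else cnt g n)"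
  using F_step[OF FI_all] by (simp add: f_def)

definition ZI :: "nat \<Rightarrow> bool" where
  "ZI n \<longleftrightarrow> set (zpre n) = {0..<cnt h n} \<union> (if n \<in> range h then {} else {cnt h n}) \<union> {1} \<union> (\<lambda>j. j + h j + 1) ` {..<cnt h n}
   \<and> sum_list (drop 2 (zpre n)) = Suc n * cnt h n"

lemma Z_step:
  assumes I: "ZI n" and n1: "n \<ge> 1"
  shows "zpre (Suc n) ! Suc n = (if Suc n \<in> range h then cnt h n + Suc n + 1 else cnt h n) \<and> ZI (Suc n)"
proof -
  let ?c = "cnt h n"
  let ?b = "\<lambda>j. j + h j + 1"
  define U where "U = set (zpre n)"
  have U: "U = {0..<?c} \<union> (if n \<in> range h then {} else {?c}) \<union> {1} \<union> ?b ` {..<?c}"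
    using I by (simp add: ZI_def U_def)
  have S: "sum_list (drop 2 (zpre n)) = Suc n * ?c" using I by (simp add: ZI_def)
  have Kh: "Suc n \<in> range h \<longleftrightarrow> (n \<notin> range h \<or> (?c = 1 \<or> ?c \<in> range ?b))"
  proof (rule K[OF h_smono h0ge])
    show "\<And>p. h (Suc p) = h p + (if Suc p = 1 \<or> Suc p \<in> range ?b then 1 else 2)" by (rule h_Suc')
    show "?c = 0 \<Longrightarrow> h 0 = Suc n"
    proof -
      assume "?c = 0"
      then have "\<not> h 0 \<le> n" using cut[OF h_smono h0ge, of 0 n] by simp
      then show "h 0 = Suc n" using n1 by (simp add: h_0)
    qed
  qed
  have rb: "?c \<in> range ?b \<longleftrightarrow> ?c \<in> ?b ` {..<?c}"
  proof
    assume "?c \<in> range ?b"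
    then obtain j where j: "?c = j + h j + 1" by auto
    then have "j < ?c" by simp
    then show "?c \<in> ?b ` {..<?c}" using j by auto
  qed auto
  have cU: "?c \<in> U \<longleftrightarrow> Suc n \<in> range h" using Kh rb U by auto
  have bnd: "\<And>x. x \<in> U \<Longrightarrow> x < ?c + Suc n + 1"
  proof -
    fix x assume "x \<in> U"
    then consider "x < ?c" | "x = ?c" | "x = 1" | j where "j < ?c" "x = j + h j + 1" using U by (auto split: if_splits)
    then show "x < ?c + Suc n + 1"
    proof cases
      case 4
      then have "h j \<le> n" using cut[OF h_smono h0ge, of j n] by simp
      then show ?thesis using 4 by simp
    qed (use n1 in auto)
  qed
  have low: "\<And>x. x < ?c \<Longrightarrow> x \<in> U" using U by auto
  define v0 where "v0 = (if Suc n \<in> range h then ?c + Suc n + 1 else ?c)"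
  have sumv: "\<And>v. sum_list (drop 2 (zpre n @ [v])) = Suc n * ?c + v"
    using S zpre_len[of n] n1 by simp
  have L: "(LEAST v. v \<notin> U \<and> (Suc n + 1) dvd sum_list (drop 2 (zpre n @ [v]))) = v0"
  proof (rule Least_equality)
    show "v0 \<notin> U \<and> (Suc n + 1) dvd sum_list (drop 2 (zpre n @ [v0]))"
    proof
      show "v0 \<notin> U" using cU bnd v0_def by auto
      have "sum_list (drop 2 (zpre n @ [v0])) = Suc n * ?c + v0" by (rule sumv)
      also have "Suc n * ?c + v0 = (Suc n + 1) * (if Suc n \<in> range h then ?c + 1 else ?c)"
        by (simp add: v0_def algebra_simps)
      finally show "(Suc n + 1) dvd sum_list (drop 2 (zpre n @ [v0]))" by (metis dvd_triv_left)
    qed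
  next
    fix v assume v: "v \<notin> U \<and> (Suc n + 1) dvd sum_list (drop 2 (zpre n @ [v]))"
    then have vc: "?c \<le> v" using low by (meson not_less)
    have "Suc n * ?c + v = (Suc n + 1) * ?c + (v - ?c)" using vc by simp
    then have "(Suc n + 1) dvd (Suc n + 1) * ?c + (v - ?c)" using v sumv by metis
    then have dv: "(Suc n + 1) dvd (v - ?c)" by (metis dvd_add_right_iff dvd_triv_left)
    show "v0 \<le> v"
    proof (cases "Suc n \<in> range h")
      case True
      then have "v \<noteq> ?c" using v cU by auto
      then have "v - ?c > 0" using vc by simp
      then have "Suc n + 1 \<le> v - ?c" using dv by (simp add: dvd_imp_le)
      then show ?thesis using True v0_def by simp
    next
      case False then show ?thesis using vc v0_def by simp
    qed
  qed
  have fS: "zpre (Suc n) = zpre n @ [v0]" using L by (simp add: U_def)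
  have val: "zpre (Suc n) ! Suc n = v0" using fS zpre_len[of n] by (simp add: nth_append)
  have cS: "cnt h (Suc n) = (if Suc n \<in> range h then ?c + 1 else ?c)" by simp
  have setS: "set (zpre (Suc n)) = insert v0 U" using fS U_def by simp
  have sumS: "sum_list (drop 2 (zpre (Suc n))) = Suc (Suc n) * cnt h (Suc n)"
    using fS sumv cS by (simp add: v0_def algebra_simps)
  have ZIS: "ZI (Suc n)"
  proof (cases "Suc n \<in> range h")
    case True
    then obtain k where k: "h k = Suc n" by (metis rangeE)
    have "k < cnt h (Suc n)" using cut[OF h_smono h0ge, of k "Suc n"] k by simp
    moreover have "\<not> k < ?c" using cut[OF h_smono h0ge, of k n] k by simp
    ultimately have "k = ?c" using True by simp
    then have v0b: "v0 = ?b ?c" using k True v0_def by simp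
    have cin: "?c \<in> U" using cU True by simp
    have "insert v0 U = {0..<Suc ?c} \<union> {1} \<union> ?b ` {..<Suc ?c}"
    proof
      show "insert v0 U \<subseteq> {0..<Suc ?c} \<union> {1} \<union> ?b ` {..<Suc ?c}" using U v0b by auto
      show "{0..<Suc ?c} \<union> {1} \<union> ?b ` {..<Suc ?c} \<subseteq> insert v0 U"
      proof
        fix x assume "x \<in> {0..<Suc ?c} \<union> {1} \<union> ?b ` {..<Suc ?c}"
        then consider "x < ?c" | "x = ?c" | "x = 1" | j where "j < Suc ?c" "x = ?b j" by (auto simp: less_Suc_eq)
        then show "x \<in> insert v0 U"
        proof cases
          case 4 then show ?thesis using U v0b by (cases "j = ?c") auto
        qed (use low cin U in auto)
      qed
    qed
    then show ?thesis unfolding ZI_def using setS sumS cS True by simp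
  next
    case False
    have "insert v0 U = {0..<?c} \<union> {?c} \<union> {1} \<union> ?b ` {..<?c}" using U False v0_def by auto
    then show ?thesis unfolding ZI_def using setS sumS cS False by simp
  qed
  show ?thesis using val ZIS v0_def by simp
qed

lemma ZI_1: "ZI 1"
proof -
  have h1: "1 \<notin> range h" using h_ge by (metis add_2_eq_Suc' le_add2 not_less_eq_eq rangeE numeral_2_eq_2 Suc_le_lessD One_nat_def le_imp_less_Suc)
  have "(LEAST v. v \<notin> {0} \<and> Suc (Suc 0) dvd sum_list (drop 2 [0, v])) = 1"
    by (rule Least_equality) auto
  then have "zpre 1 = [0, 1]" by simp
  then show ?thesis using h1 by (auto simp: ZI_def)
qed

lemma ZI_all: "n \<ge> 1 \<Longrightarrow> ZI n"
proof (induction n)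
  case (Suc n) then show ?case using Z_step ZI_1 by (cases "n = 0") auto
qed simp

lemma z_Suc: "n \<ge> 1 \<Longrightarrow> z (Suc n) = (if Suc n \<in> range h then cnt h n + Suc n + 1 else cnt h n)"
  using Z_step[OF ZI_all] by (simp add: z_def)

lemma z1: "z 1 = 1"
proof -
  have "(LEAST v. v \<notin> {0} \<and> Suc (Suc 0) dvd sum_list (drop 2 [0, v])) = 1"
    by (rule Least_equality) auto
  then show ?thesis by (simp add: z_def)
qed

lemma main_step:
  assumes k1: "k \<ge> 1"
  shows "int (z (Suc k)) \<in> {int (f (Suc k)), int (f (Suc k)) + int (Suc k), int (f (Suc k)) + 1, int (f (Suc k)) - int (Suc k)}"
proof -
  let ?c = "cnt g k" and ?d = "cnt h k"
  have cg: "\<And>m. g m \<le> k \<longleftrightarrow> m < ?c" using cut[OF g_smono g0ge] .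
  have ch: "\<And>m. h m \<le> k \<longleftrightarrow> m < ?d" using cut[OF h_smono h0ge] .
  have fv: "f (Suc k) = (if Suc k \<in> range g then ?c + Suc k else ?c)" by (rule f_Suc)
  have zv: "z (Suc k) = (if Suc k \<in> range h then ?d + Suc k + 1 else ?d)" using z_Suc[OF k1] .
  have dc: "\<not> ?c < ?d"
  proof
    assume "?c < ?d"
    then have "h ?c \<le> k" using ch by simp
    then have "g ?c \<le> k" using D_bounds[of ?c] by linarith
    then show False using cg by simp
  qed
  have cd: "\<not> ?d + 1 < ?c"
  proof
    assume "?d + 1 < ?c"
    then have "g (?d + 1) \<le> k" using cg by simp
    moreover have "g ?d < g (?d + 1)" using g_smono by (simp add: strict_mono_def)
    ultimately have "h ?d \<le> k" using D_bounds[of ?d] by linarith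
    then show False using ch by simp
  qed
  show ?thesis
  proof (cases "?c = ?d")
    case True
    have "\<not> (Suc k \<in> range h \<and> Suc k \<notin> range g)"
    proof
      assume a: "Suc k \<in> range h \<and> Suc k \<notin> range g"
      then obtain m where m: "h m = Suc k" by (metis rangeE)
      have "\<not> m < ?d" using ch[of m] m by simp
      moreover have "\<not> ?d < m"
      proof
        assume "?d < m"
        then have "h ?d < h m" using h_smono by (simp add: strict_mono_def)
        moreover have "\<not> h ?d \<le> k" using ch by simp
        ultimately show False using m by simp
      qed
      ultimately have md: "m = ?d" by simp
      have "g m \<le> Suc k" using D_bounds[of m] m by simp
      moreover have "\<not> g m \<le> k" using cg[of m] md True by simp
      ultimately have "g m = Suc k" by simp
      then show False using a by (metis rangeI)
    qed
    then show ?thesis using fv zv True by auto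
  next
    case False
    then have c1: "?c = ?d + 1" using dc cd by simp
    have "g ?d \<le> k" using cg c1 by simp
    moreover have "\<not> h ?d \<le> k" using ch by simp
    ultimately have "h ?d = Suc k" using D_bounds[of ?d] by simp
    then have "Suc k \<in> range h" by (metis rangeI)
    then show ?thesis using fv zv c1 by auto
  qed
qed

theorem theorem6:
  fixes n :: nat
  shows "int (z n) \<in> {int (f n), int (f n) + int n, int (f n) + 1, int (f n) - int n}"
proof (cases n)
  case 0
  then show ?thesis by (simp add: f_def z_def)
next
  case (Suc k)
  show ?thesis
  proof (cases k)
    case 0
    have "Suc 0 \<in> range g" using g_0 by (metis rangeI One_nat_def)
    then have "f 1 = 1" using f_Suc[of 0] by simp
    then show ?thesis using Suc 0 z1 by simp
  next
    case (Suc k')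
    then show ?thesis using main_step[of k] \<open>n = Suc k\<close> by simp
  qed
qed

end
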